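(* In the setting of the context, with $S(t)=\tilde S e^{(\beta/\gamma)\tilde R}\varphi^{-1}(t)$ and $S(\infty):=\lim_{t\to\infty}S(t)$, the following relation holds: \[ S(\infty)=\tilde S+\tilde E+\tilde I+\frac{\gamma}{\beta}\log\frac{S(\infty)}{\tilde S}. \]
   Context: Let $\beta,\gamma,\delta>0$ be constants and $\tilde S,\tilde E,\tilde I,\tilde R$ real numbers with $N:=\tilde S+\tilde E+\tilde I+\tilde R>0$. Standing assumptions: (A1) $\tilde I>0$; (A2) $\tilde E>(\gamma/\delta)\tilde I$; (A3) $\tilde S>\delta\tilde E/(\beta\tilde I)$; (A4) $\tilde R\ge 0$ and $N>\tilde S e^{(\beta/\gamma)\tilde R}+\tilde R$. Let $\alpha$ be the unique solution in $(\tilde R,N)$ of $x=N-\tilde S e^{(\beta/\gamma)\tilde R}e^{-(\beta/\gamma)x}$, and assume (A5) $\tilde S<(\gamma/\beta)e^{(\beta/\gamma)(\alpha-\tilde R)}$. Put $u_0:=e^{-(\beta/\gamma)\tilde R}$, $u_\infty:=e^{-(\beta/\gamma)\alpha}$. Let $\psi$ be the unique function, continuous and positive on $(u_\infty,u_0]$ and $C^1$ on $(u_\infty,u_0)$, satisfying $\psi'(u)\psi(u)-\frac{\gamma+\delta}{u}\psi(u)=-\delta\,\frac{\beta N-\beta\tilde S e^{(\beta/\gamma)\tilde R}u+\gamma\log u}{u}$ on $(u_\infty,u_0)$ and $\psi(u_0)=\beta\tilde I$. Let $\varphi(u):=\int_u^{u_0}\frac{d\xi}{\xi\psi(\xi)}$;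 $\varphi$ is a strictly decreasing continuous bijection from $(u_\infty,u_0]$ onto $[0,\infty)$, with inverse $\varphi^{-1}:[0,\infty)\to(u_\infty,u_0]$. *)

theory Defs
  imports "HOL-Analysis.Analysis"
begin

end

theory Submission
  imports Defs
begin

theorem theorem12:
  fixes \<beta> \<gamma> \<delta> St Et It Rt N \<alpha> u0 uinf :: real
    and \<psi> \<phi> S :: "real \<Rightarrow> real"
  assumes pos: "\<beta> > 0" "\<gamma> > 0" "\<delta> > 0"
    and N_def: "N = St + Et + It + Rt" and N_pos: "N > 0"
    and A1: "It > 0"
    and A2: "Et > (\<gamma> / \<delta>) * It"
    and A3: "St > \<delta> * Et / (\<beta> * It)"
    and A4: "Rt \<ge> 0" "N > St * exp ((\<beta> / \<gamma>) * Rt) + Rt"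
    and alpha_mem: "\<alpha> \<in> {Rt<..<N}"
    and alpha_eq: "\<alpha> = N - St * exp ((\<beta> / \<gamma>) * Rt) * exp (- (\<beta> / \<gamma>) * \<alpha>)"
    and A5: "St < (\<gamma> / \<beta>) * exp ((\<beta> / \<gamma>) * (\<alpha> - Rt))"
    and u0_def: "u0 = exp (- (\<beta> / \<gamma>) * Rt)"
    and uinf_def: "uinf = exp (- (\<beta> / \<gamma>) * \<alpha>)"
    and psi_cont: "continuous_on {uinf<..u0} \<psi>"
    and psi_pos: "\<forall>u\<in>{uinf<..u0}. \<psi> u > 0"
    and psi_diff: "\<forall>u\<in>{uinf<..<u0}. \<psi> differentiable (at u)"
    and psi_C1: "continuous_on {uinf<..<u0} (deriv \<psi>)"
    and psi_ode: "\<forall>u\<in>{uinf<..<u0}.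
        deriv \<psi> u * \<psi> u - (\<gamma> + \<delta>) / u * \<psi> u
        = - \<delta> * (\<beta> * N - \<beta> * St * exp ((\<beta> / \<gamma>) * Rt) * u + \<gamma> * ln u) / u"
    and psi_init: "\<psi> u0 = \<beta> * It"
    and phi_def: "\<forall>u. \<phi> u = integral {u..u0} (\<lambda>\<xi>. 1 / (\<xi> * \<psi> \<xi>))"
    and S_def: "\<forall>t. S t = St * exp ((\<beta> / \<gamma>) * Rt) * the_inv_into {uinf<..u0} \<phi> t"
  shows "\<exists>Sinf. (S \<longlongrightarrow> Sinf) at_top \<and>
           Sinf = St + Et + It + (\<gamma> / \<beta>) * ln (Sinf / St)"
  proof -
  define K where "K = St * exp ((\<beta> / \<gamma>) * Rt)"
  define f where "f = (\<lambda>u. \<beta> * N - \<beta> * K * u + \<gamma> * ln u)"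
  define h where "h = (\<lambda>\<xi>::real. 1 / (\<xi> * \<psi> \<xi>))"
  define C where "C = \<gamma> / uinf"
  have Et_pos: "Et > 0" using A2 A1 pos by (smt (verit) divide_pos_pos mult_pos_pos)
  have EB: "Et * \<beta> > 0" using Et_pos pos by simp
  have St_pos: "St > 0" using A3 Et_pos A1 pos
    by (smt (verit) divide_pos_pos mult_pos_pos)
  have K_pos: "K > 0" unfolding K_def using St_pos by simp
  have uinf_pos: "uinf > 0" and u0_pos: "u0 > 0" using uinf_def u0_def by auto
  have uinf_lt: "uinf < u0"
  proof -
    have "\<beta> * Rt < \<beta> * \<alpha>" using alpha_mem pos by simp
    hence "\<beta> * Rt / \<gamma> < \<beta> * \<alpha> / \<gamma>" using pos by (simp add: divide_strict_right_mono)
    thus ?thesis unfolding uinf_def u0_def by simp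
  qed
  have C_pos: "C > 0" unfolding C_def using pos uinf_pos by simp
  have Kuinf: "K * uinf = N - \<alpha>"
    using alpha_eq unfolding K_def uinf_def by simp
  have lnuinf: "ln uinf = - (\<beta> / \<gamma>) * \<alpha>" unfolding uinf_def by simp
  have f_uinf: "f uinf = 0"
  proof -
    have a: "\<gamma> * ln uinf = - \<beta> * \<alpha>" using lnuinf pos by simp
    have b: "\<beta> * K * uinf = \<beta> * (N - \<alpha>)" using Kuinf by (simp add: mult.assoc)
    show ?thesis unfolding f_def using a b by (simp add: algebra_simps)
  qed
  have Ku0: "K * u0 = St" unfolding K_def u0_def by (simp add: mult_exp_exp)
  have f_u0: "f u0 = \<beta> * (Et + It)"
    unfolding f_def using Ku0 pos N_def unfolding u0_def
    by (simp add: algebra_simps)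
  have f_bound: "f u \<le> C * (u - uinf)" if "u \<ge> uinf" for u
  proof -
    have up: "u > 0" using that uinf_pos by simp
    have "ln u - ln uinf \<le> (u - uinf) / uinf" using ln_diff_le up uinf_pos by blast
    hence "\<gamma> * (ln u - ln uinf) \<le> \<gamma> * ((u - uinf) / uinf)"
      using pos by (intro mult_left_mono) auto
    moreover have "\<beta> * K * (u - uinf) \<ge> 0" using pos K_pos that by simp
    moreover have "f u = f u - f uinf" using f_uinf by simp
    moreover have "f u - f uinf = - \<beta> * K * (u - uinf) + \<gamma> * (ln u - ln uinf)"
      unfolding f_def by (simp add: algebra_simps)
    ultimately show ?thesis unfolding C_def by (simp add: field_simps)
  qed
  have f_deriv: "(f has_real_derivative (- \<beta> * K + \<gamma> / u)) (at u)" if "u > 0" for u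
    unfolding f_def using that
    by (auto intro!: derivative_eq_intros simp: field_simps)
  have psi_lt_f: "\<psi> u < f u" if u: "u \<in> {uinf<..u0}" for u
  proof (rule ccontr)
    assume "\<not> \<psi> u < f u"
    hence g2: "f u - \<psi> u \<le> 0" by simp
    have "u \<noteq> u0" using g2 f_u0 psi_init EB by (auto simp: algebra_simps)
    hence u2: "uinf < u" "u < u0" using u by auto
    define A where "A = {v \<in> {u..u0}. f v - \<psi> v \<le> 0}"
    have contf: "continuous_on {u..u0} f" unfolding f_def using u2 uinf_pos
      by (auto intro!: continuous_intros)
    have contp: "continuous_on {u..u0} \<psi>"
      by (rule continuous_on_subset[OF psi_cont]) (use u2 in auto)
    have clA: "closed A" unfolding A_def
      by (rule continuous_on_closed_Collect_le) (auto intro!: continuous_intros contf contp)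
    have neA: "A \<noteq> {}" unfolding A_def using g2 u2 by (auto intro!: exI[of _ u])
    have bdA: "bdd_above A" unfolding A_def by (auto intro: bdd_aboveI[of _ u0])
    define u1 where "u1 = Sup A"
    have u1A: "u1 \<in> A" unfolding u1_def using closed_contains_Sup neA bdA clA by blast
    have u1_ge: "u1 \<ge> u" and u1_le: "u1 \<le> u0" and g1: "f u1 - \<psi> u1 \<le> 0"
      using u1A unfolding A_def by auto
    have "u1 \<noteq> u0" using g1 f_u0 psi_init EB by (auto simp: algebra_simps)
    hence u1_lt: "u1 < u0" using u1_le by simp
    have gpos: "f v - \<psi> v > 0" if "u1 < v" "v \<le> u0" for v
    proof (rule ccontr)
      assume "\<not> f v - \<psi> v > 0"
      hence "v \<in> A" unfolding A_def using that u1_ge by auto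
      hence "v \<le> u1" unfolding u1_def using bdA by (simp add: cSup_upper)
      thus False using that by simp
    qed
    have u1_in: "u1 \<in> {uinf<..<u0}" using u1_ge u2 u1_lt by auto
    have psi1: "\<psi> u1 > 0" using psi_pos u1_in by auto
    have u1_pos: "u1 > 0" using u1_in uinf_pos by simp
    have dpsi: "(\<psi> has_real_derivative deriv \<psi> u1) (at u1)"
      using psi_diff u1_in DERIV_deriv_iff_real_differentiable by blast
    have ode1: "deriv \<psi> u1 * \<psi> u1 - (\<gamma> + \<delta>) / u1 * \<psi> u1 = - \<delta> * f u1 / u1"
      using psi_ode u1_in unfolding f_def K_def by auto
    have "f u1 / \<psi> u1 \<le> 1" using g1 psi1 by simp
    have dp_eq: "deriv \<psi> u1 = (\<gamma> + \<delta>) / u1 - \<delta> * (f u1 / \<psi> u1) / u1"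
      using ode1 psi1 u1_pos by (simp add: field_simps)
    have "\<delta> * (f u1 / \<psi> u1) / u1 \<le> \<delta> / u1"
    proof -
      have "\<delta> * (f u1 / \<psi> u1) \<le> \<delta> * 1"
        using \<open>f u1 / \<psi> u1 \<le> 1\<close> pos by (intro mult_left_mono) auto
      thus ?thesis using u1_pos by (intro divide_right_mono) auto
    qed
    hence dp_ge: "deriv \<psi> u1 \<ge> \<gamma> / u1" using dp_eq by (simp add: add_divide_distrib)
    have dg: "((\<lambda>v. f v - \<psi> v) has_real_derivative ((- \<beta> * K + \<gamma> / u1) - deriv \<psi> u1)) (at u1)"
      using f_deriv[OF u1_pos] dpsi by (rule DERIV_diff)
    have "(- \<beta> * K + \<gamma> / u1) - deriv \<psi> u1 < 0" using dp_ge pos K_pos mult_pos_pos[of \<beta> K] by linarith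
    from DERIV_neg_dec_right[OF dg this] obtain d where d: "d > 0"
      "\<And>hh. hh > 0 \<Longrightarrow> hh < d \<Longrightarrow> f u1 - \<psi> u1 > f (u1 + hh) - \<psi> (u1 + hh)" by blast
    define hh where "hh = min (d/2) (u0 - u1)"
    have "hh > 0" "hh < d" using d u1_lt unfolding hh_def by auto
    hence "f (u1 + hh) - \<psi> (u1 + hh) < 0" using d(2) g1 by fastforce
    moreover have "f (u1 + hh) - \<psi> (u1 + hh) > 0"
      using gpos \<open>hh > 0\<close> unfolding hh_def by auto
    ultimately show False by simp
  qed
  have psi_bound: "\<psi> u < C * (u - uinf)" if "u \<in> {uinf<..u0}" for u
    using psi_lt_f[OF that] f_bound[of u] that by auto
  have psi_pos': "\<psi> u > 0" if "u \<in> {uinf<..u0}" for u using psi_pos that by auto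
  define m where "m = 1 / (u0 * C * (u0 - uinf))"
  have m_pos: "m > 0" unfolding m_def using u0_pos C_pos uinf_lt by simp
  define c0 where "c0 = 1 / (u0 * C)"
  have c0_pos: "c0 > 0" unfolding c0_def using u0_pos C_pos by simp
  have h_lb: "h \<xi> \<ge> c0 / (\<xi> - uinf)" if "\<xi> \<in> {uinf<..u0}" for \<xi>
  proof -
    have p: "0 < \<xi> * \<psi> \<xi>" using psi_pos'[OF that] that uinf_pos by simp
    have "\<xi> * \<psi> \<xi> \<le> u0 * (C * (\<xi> - uinf))"
      using psi_bound[OF that] psi_pos'[OF that] that uinf_pos
      by (intro mult_mono) auto
    hence "1 / (u0 * (C * (\<xi> - uinf))) \<le> 1 / (\<xi> * \<psi> \<xi>)"
      using p by (intro divide_left_mono) auto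
    thus ?thesis unfolding h_def c0_def by simp
  qed
  have h_lb2: "h \<xi> \<ge> m" if "\<xi> \<in> {uinf<..u0}" for \<xi>
  proof -
    have "c0 / (u0 - uinf) \<le> c0 / (\<xi> - uinf)"
      using that c0_pos by (intro divide_left_mono) auto
    thus ?thesis using h_lb[OF that] unfolding m_def c0_def by simp
  qed
  have h_cont: "continuous_on {a..b} h" if "uinf < a" "b \<le> u0" for a b
  proof -
    have "continuous_on {a..b} \<psi>"
      by (rule continuous_on_subset[OF psi_cont]) (use that in auto)
    moreover have "\<forall>x\<in>{a..b}. x * \<psi> x \<noteq> 0"
    proof
      fix x assume x: "x \<in> {a..b}"
      hence "\<psi> x > 0" "x > 0" using psi_pos' that uinf_pos by auto
      thus "x * \<psi> x \<noteq> 0" by simp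
    qed
    ultimately show ?thesis unfolding h_def
      by (auto intro!: continuous_intros)
  qed
  have h_int: "h integrable_on {a..b}" if "uinf < a" "b \<le> u0" for a b
    using h_cont[OF that] integrable_continuous_interval by blast
  have phi_eq: "\<phi> u = integral {u..u0} h" for u using phi_def unfolding h_def by simp
  have phi_u0: "\<phi> u0 = 0" using phi_eq by simp
  have phi_split: "\<phi> u = integral {u..v} h + \<phi> v" if "uinf < u" "u \<le> v" "v \<le> u0" for u v
    unfolding phi_eq using Henstock_Kurzweil_Integration.integral_combine[OF that(2,3) h_int[OF that(1) order_refl]] by simp
  have int_pos: "integral {u..v} h \<ge> m * (v - u)" if "uinf < u" "u \<le> v" "v \<le> u0" for u v
  proof -
    have "integral {u..v} (\<lambda>_. m) \<le> integral {u..v} h"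
      by (rule integral_le) (use h_int that h_lb2 in auto)
    thus ?thesis using that by (simp add: mult.commute)
  qed
  have phi_strict: "\<phi> u > \<phi> v" if "uinf < u" "u < v" "v \<le> u0" for u v
    using phi_split[of u v] int_pos[of u v] that m_pos
    by (smt (verit) mult_pos_pos)
  have phi_mono: "\<phi> u \<ge> \<phi> v" if "uinf < u" "u \<le> v" "v \<le> u0" for u v
    using phi_strict[of u v] that by (cases "u = v") auto
  have inj: "inj_on \<phi> {uinf<..u0}"
    by (rule inj_onI) (metis greaterThanAtMost_iff linorder_neq_iff phi_strict less_irrefl)
  have phi_cont: "continuous_on {a..u0} \<phi>" if "uinf < a" for a
  proof -
    have "continuous_on {a..u0} (\<lambda>x. integral {x..u0} h)"
      using indefinite_integral_continuous_1'[OF h_int[OF that order_refl]] .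
    thus ?thesis using phi_eq by simp
  qed
  have phi_big: "\<exists>u\<in>{uinf<..u0}. \<phi> u \<ge> T" if "T \<ge> 0" for T
  proof -
    define u where "u = uinf + (u0 - uinf) * exp (- T / c0)"
    have e: "exp (- T / c0) \<le> 1" using that c0_pos by simp
    have upos: "u - uinf > 0" unfolding u_def using uinf_lt by simp
    have "(u0 - uinf) * exp (- T / c0) \<le> (u0 - uinf) * 1"
      using e uinf_lt by (intro mult_left_mono) auto
    hence uin: "u \<in> {uinf<..u0}" using upos unfolding u_def by auto
    have der: "((\<lambda>x. c0 * ln (x - uinf)) has_real_derivative c0 / (x - uinf)) (at x within {u..u0})"
      if "x \<in> {u..u0}" for x
      using that upos by (auto intro!: derivative_eq_intros)
    have "((\<lambda>x. c0 / (x - uinf)) has_integral (c0 * ln (u0 - uinf) - c0 * ln (u - uinf))) {u..u0}"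
      using fundamental_theorem_of_calculus[of u u0 "\<lambda>x. c0 * ln (x - uinf)" "\<lambda>x. c0 / (x - uinf)"]
        der uin by (auto simp: has_real_derivative_iff_has_vector_derivative)
    moreover have "h integrable_on {u..u0}" using h_int uin by auto
    ultimately have "c0 * ln (u0 - uinf) - c0 * ln (u - uinf) \<le> integral {u..u0} h"
      using h_lb uin
      by (intro has_integral_le[OF _ integrable_integral]) auto
    moreover have "ln (u - uinf) = ln (u0 - uinf) - T / c0"
      unfolding u_def using uinf_lt by (simp add: ln_mult)
    ultimately have "T \<le> \<phi> u" using c0_pos phi_eq by (simp add: algebra_simps)
    thus ?thesis using uin by blast
  qed
  have surj: "\<exists>u\<in>{uinf<..u0}. \<phi> u = t" if t0: "t \<ge> 0" for t
  proof -
    obtain a where a: "a \<in> {uinf<..u0}" "\<phi> a \<ge> t" using phi_big[OF t0] by blast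
    from IVT2'[of \<phi> u0 t a] a phi_cont[of a] phi_u0 t0
    obtain x where "a \<le> x" "x \<le> u0" "\<phi> x = t" by auto
    thus ?thesis using a by auto
  qed
  define inv where "inv = the_inv_into {uinf<..u0} \<phi>"
  have inv_prop: "inv t \<in> {uinf<..u0} \<and> \<phi> (inv t) = t" if t0: "t \<ge> 0" for t
  proof -
    obtain u where "u \<in> {uinf<..u0}" "\<phi> u = t" using surj[OF t0] by blast
    thus ?thesis unfolding inv_def using the_inv_into_f_eq[OF inj] by auto
  qed
  have lim: "(inv \<longlongrightarrow> uinf) at_top"
  proof (rule order_tendstoI)
    fix a assume "a < uinf"
    have "eventually (\<lambda>t::real. t \<ge> 0) at_top" using eventually_ge_at_top by blast
    thus "eventually (\<lambda>t. a < inv t) at_top"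
      by eventually_elim (use inv_prop \<open>a < uinf\<close> in fastforce)
  next
    fix a assume a: "a > uinf"
    define b where "b = min a u0"
    have b: "b \<in> {uinf<..u0}" "b \<le> a" unfolding b_def using a uinf_lt by auto
    have "eventually (\<lambda>t::real. t > max 0 (\<phi> b)) at_top" using eventually_gt_at_top by blast
    thus "eventually (\<lambda>t. inv t < a) at_top"
    proof eventually_elim
      case (elim t)
      hence t0: "t \<ge> 0" by simp
      have "inv t < b"
      proof (rule ccontr)
        assume "\<not> inv t < b"
        hence "\<phi> (inv t) \<le> \<phi> b" using phi_mono[of b "inv t"] b inv_prop[OF t0] by auto
        thus False using inv_prop[OF t0] elim by simp
      qed
      thus ?case using b by simp
    qed
  qed
  have Slim: "(S \<longlongrightarrow> K * uinf) at_top"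
  proof -
    have "S = (\<lambda>t. K * inv t)" using S_def unfolding K_def inv_def by auto
    thus ?thesis using tendsto_mult_left[OF lim] by simp
  qed
  have "ln (K * uinf / St) = (\<beta> / \<gamma>) * Rt - (\<beta> / \<gamma>) * \<alpha>"
  proof -
    have "K * uinf / St = exp ((\<beta> / \<gamma>) * Rt - (\<beta> / \<gamma>) * \<alpha>)"
      unfolding K_def uinf_def using St_pos by (simp add: exp_diff exp_minus field_simps)
    thus ?thesis by simp
  qed
  hence "St + Et + It + (\<gamma> / \<beta>) * ln (K * uinf / St) = N - \<alpha>"
    using pos N_def by (simp add: field_simps)
  thus ?thesis using Slim Kuinf by auto
qed

end
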